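(* Let $b\ge3$, $2\le j\le b-1$, let $q\in[0,\infty)^b$ with $q_1\le q_2\le\dots\le q_{j-1}$, and let $0\le\alpha<1$. Let $p=(p_1,\dots,p_{j-1},0,\dots,0)$ be a probability vector in $\mathbb R^b$ (i.e. $p_i=0$ for $i\ge j$) with $p_i\le1-\alpha$ for all $i$. Then $$\Psi_j(p_1,\dots,p_{j-1},0,\dots,0;\,q_1,\dots,q_b)\le\Psi_j(1-\alpha,\alpha,0,\dots,0;\,q_1,\dots,q_b).$$
   Context: For an integer $1\le j\le b-1$ and vectors $p,q\in\mathbb R^b$, $$\Psi_j(p;q)=\frac{1}{(b-j-1)!}\sum_{\sigma\in S_b}\Big(p_{\sigma(1)}\cdots p_{\sigma(j)}\,q_{\sigma(j+1)}+q_{\sigma(1)}\cdots q_{\sigma(j)}\,p_{\sigma(j+1)}\Big),$$ where $S_b$ is the set of permutations of $\{1,\dots,b\}$; the first $b$ arguments form $p$ and the last $b$ form $q$. *)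

theory Defs
  imports Complex_Main "HOL-Combinatorics.Permutations"
begin

text \<open>Vectors in R^b are functions nat => real, indexed by 1..b (values outside are irrelevant).\<close>

definition Psi :: "nat \<Rightarrow> nat \<Rightarrow> (nat \<Rightarrow> real) \<Rightarrow> (nat \<Rightarrow> real) \<Rightarrow> real" where
  "Psi b j p q = (1 / fact (b - j - 1)) *
     (\<Sum>\<sigma> \<in> {\<sigma>. \<sigma> permutes {1..b}}.
        (\<Prod>i=1..j. p (\<sigma> i)) * q (\<sigma> (j+1)) + (\<Prod>i=1..j. q (\<sigma> i)) * p (\<sigma> (j+1)))"

end

theory Submission
  imports Defs
begin

definition FF :: "nat \<Rightarrow> nat \<Rightarrow> (nat \<Rightarrow> real) \<Rightarrow> nat \<Rightarrow> real" where
  "FF b j q k = (\<Sum>\<sigma> \<in> {\<sigma>. \<sigma> permutes {1..b} \<and> \<sigma> (j+1) = k}. \<Prod>i=1..j. q (\<sigma> i))"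

lemma finite_perms: "finite {\<sigma>. \<sigma> permutes {1..(b::nat)} \<and> P \<sigma>}"
  by (rule finite_subset[OF _ finite_permutations[of "{1..b}"]]) auto

lemma FF_mono:
  assumes "1 \<le> k" "k \<le> b" "1 \<le> l" "l \<le> b" "k \<noteq> l" "q k \<le> q l" "j + 1 \<le> b"
    and q0: "\<forall>i\<in>{1..b}. q i \<ge> 0"
  shows "FF b j q l \<le> FF b j q k"
proof -
  let ?t = "transpose k l"
  let ?Sk = "{\<sigma>. \<sigma> permutes {1..b} \<and> \<sigma> (j+1) = k}"
  let ?Sl = "{\<sigma>. \<sigma> permutes {1..b} \<and> \<sigma> (j+1) = l}"
  have tp: "?t permutes {1..b}" using assms by (intro permutes_swap_id) auto
  have "FF b j q l = (\<Sum>\<sigma>\<in>?Sk. \<Prod>i=1..j. q (?t (\<sigma> i)))"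
    unfolding FF_def
    by (rule sum.reindex_bij_witness[of _ "\<lambda>\<sigma>. ?t \<circ> \<sigma>" "\<lambda>\<sigma>. ?t \<circ> \<sigma>"])
       (use tp permutes_compose[of _ "{1..b}" ?t] in \<open>auto simp: fun_eq_iff\<close>)
  also have "\<dots> \<le> (\<Sum>\<sigma>\<in>?Sk. \<Prod>i=1..j. q (\<sigma> i))"
  proof (rule sum_mono, rule prod_mono)
    fix \<sigma> i assume s: "\<sigma> \<in> ?Sk" and i: "i \<in> {1..j}"
    then have sp: "\<sigma> permutes {1..b}" and sk: "\<sigma> (j+1) = k" by auto
    have ib: "\<sigma> i \<in> {1..b}" using i assms(7) permutes_in_image[OF sp] by auto
    have "\<sigma> i \<noteq> k"
    proof
      assume "\<sigma> i = k"
      then have "i = j + 1" using sk injD[OF permutes_inj[OF sp]] by metis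
      then show False using i by simp
    qed
    then have "q (?t (\<sigma> i)) \<le> q (\<sigma> i)" using assms(6)
      by (cases "\<sigma> i = l") (auto simp: transpose_def)
    moreover have "?t (\<sigma> i) \<in> {1..b}" using ib assms by (auto simp: transpose_def)
    ultimately show "0 \<le> q (?t (\<sigma> i)) \<and> q (?t (\<sigma> i)) \<le> q (\<sigma> i)" using q0 by auto
  qed
  finally show ?thesis unfolding FF_def .
qed

lemma B_part:
  assumes "j + 1 \<le> b"
  shows "(\<Sum>\<sigma> \<in> {\<sigma>. \<sigma> permutes {1..b}}. (\<Prod>i=1..j. q (\<sigma> i)) * p (\<sigma> (j+1)))
       = (\<Sum>k=1..b. p k * FF b j q k)"
proof -
  have "(\<Sum>\<sigma> \<in> {\<sigma>. \<sigma> permutes {1..b}}. (\<Prod>i=1..j. q (\<sigma> i)) * p (\<sigma> (j+1)))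
    = (\<Sum>k=1..b. \<Sum>\<sigma>\<in>{\<sigma>\<in>{\<sigma>. \<sigma> permutes {1..b}}. \<sigma> (j+1) = k}. (\<Prod>i=1..j. q (\<sigma> i)) * p (\<sigma> (j+1)))"
    by (rule sum.group[symmetric]) (use finite_perms[of b "\<lambda>_. True"] assms permutes_in_image[of _ "{1..b}" "j+1"] in \<open>auto\<close>)
  also have "\<dots> = (\<Sum>k=1..b. p k * FF b j q k)"
    unfolding FF_def sum_distrib_left
    by (intro sum.cong refl) (auto simp: mult.commute)
  finally show ?thesis .
qed

theorem mainTheorem8:
  fixes b j :: nat and p q :: "nat \<Rightarrow> real" and \<alpha> :: real
  assumes "b \<ge> 3" and "2 \<le> j" and "j \<le> b - 1"
    and "\<forall>i\<in>{1..b}. q i \<ge> 0"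
    and "\<forall>i\<in>{1..j-1}. \<forall>k\<in>{1..j-1}. i \<le> k \<longrightarrow> q i \<le> q k"
    and "0 \<le> \<alpha>" and "\<alpha> < 1"
    and "\<forall>i\<in>{1..b}. p i \<ge> 0"
    and "(\<Sum>i=1..b. p i) = 1"
    and "\<forall>i\<in>{j..b}. p i = 0"
    and "\<forall>i\<in>{1..b}. p i \<le> 1 - \<alpha>"
  shows "Psi b j p q \<le> Psi b j (\<lambda>i. if i = 1 then 1 - \<alpha> else if i = 2 then \<alpha> else 0) q"
proof -
  define p' where "p' = (\<lambda>i::nat. if i = 1 then 1 - \<alpha> else if i = 2 then \<alpha> else 0)"
  let ?P = "{\<sigma>. \<sigma> permutes {1..b}}"
  have jb: "j + 1 \<le> b" using assms by auto
  define F where "F = FF b j q"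
  have c: "0 < 1 / (fact (b - j - 1) :: real)" by simp
  have Azero: "(\<Prod>i=1..j. p (\<sigma> i)) = 0" if "\<sigma> \<in> ?P" for \<sigma>
  proof -
    have sp: "\<sigma> permutes {1..b}" using that by auto
    have "\<exists>i\<in>{1..j}. \<sigma> i \<notin> {1..j-1}"
    proof (rule ccontr)
      assume "\<not> ?thesis"
      then have "\<sigma> ` {1..j} \<subseteq> {1..j-1}" by auto
      then have "card (\<sigma> ` {1..j}) \<le> card {1..j-1}" by (intro card_mono) auto
      moreover have "card (\<sigma> ` {1..j}) = j"
        using card_image[OF permutes_inj_on[OF sp, of "{1..j}"]] by simp
      ultimately show False using assms by simp
    qed
    then obtain i where i: "i \<in> {1..j}" "\<sigma> i \<notin> {1..j-1}" by blast
    have "\<sigma> i \<in> {1..b}" using i jb permutes_in_image[OF sp] by auto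
    then have "p (\<sigma> i) = 0" using i assms(10) by auto
    then show ?thesis using i by (intro prod_zero) auto
  qed
  have L: "Psi b j p q = (1 / fact (b - j - 1)) * (\<Sum>k=1..b. p k * F k)"
  proof -
    have "(\<Sum>\<sigma>\<in>?P. (\<Prod>i=1..j. p (\<sigma> i)) * q (\<sigma> (j+1)) + (\<Prod>i=1..j. q (\<sigma> i)) * p (\<sigma> (j+1)))
       = (\<Sum>\<sigma>\<in>?P. (\<Prod>i=1..j. q (\<sigma> i)) * p (\<sigma> (j+1)))"
      by (rule sum.cong) (simp_all only: Azero mult_zero_left add_0)
    then show ?thesis unfolding Psi_def F_def B_part[OF jb] by simp
  qed
  have R0: "(\<Sum>\<sigma>\<in>?P. (\<Prod>i=1..j. q (\<sigma> i)) * p' (\<sigma> (j+1))) \<le>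
      (\<Sum>\<sigma>\<in>?P. (\<Prod>i=1..j. p' (\<sigma> i)) * q (\<sigma> (j+1)) + (\<Prod>i=1..j. q (\<sigma> i)) * p' (\<sigma> (j+1)))"
  proof (rule sum_mono)
    fix \<sigma> assume "\<sigma> \<in> ?P"
    then have sp: "\<sigma> permutes {1..b}" by auto
    have "q (\<sigma> (j+1)) \<ge> 0" using jb permutes_in_image[OF sp] assms(4) by auto
    moreover have "(\<Prod>i=1..j. p' (\<sigma> i)) \<ge> 0" using assms(6,7) by (intro prod_nonneg) (auto simp: p'_def)
    ultimately show "(\<Prod>i=1..j. q (\<sigma> i)) * p' (\<sigma> (j+1)) \<le> (\<Prod>i=1..j. p' (\<sigma> i)) * q (\<sigma> (j+1)) + (\<Prod>i=1..j. q (\<sigma> i)) * p' (\<sigma> (j+1))"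
      by simp
  qed
  have "(\<Sum>k=1..b. p' k * F k) = (\<Sum>k\<in>{1,2}. p' k * F k)"
    using assms(1) by (intro sum.mono_neutral_right) (auto simp: p'_def)
  then have R1: "(\<Sum>k=1..b. p' k * F k) = (1-\<alpha>) * F 1 + \<alpha> * F 2" by (simp add: p'_def)
  have R: "(1 / fact (b - j - 1)) * ((1-\<alpha>) * F 1 + \<alpha> * F 2) \<le> Psi b j p' q"
  proof -
    have eq: "(1-\<alpha>) * F 1 + \<alpha> * F 2 = (\<Sum>\<sigma>\<in>?P. (\<Prod>i=1..j. q (\<sigma> i)) * p' (\<sigma> (j+1)))"
      using R1 B_part[OF jb, of q p'] unfolding F_def by simp
    show ?thesis unfolding Psi_def eq using R0 c by (intro mult_left_mono) auto
  qed
  have ins: "{1..b} = insert 1 {2..b}" using assms(1) by auto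
  have sum1: "(\<Sum>k=1..b. p k) = p 1 + (\<Sum>k=2..b. p k)"
    unfolding ins by (subst sum.insert) auto
  have s2: "(\<Sum>k=1..b. p k * F k) = p 1 * F 1 + (\<Sum>k=2..b. p k * F k)"
    unfolding ins by (subst sum.insert) auto
  have s3: "(\<Sum>k=2..b. p k * F k) \<le> (\<Sum>k=2..b. p k * F 2)"
  proof (rule sum_mono)
    fix k assume k: "k \<in> {2..b}"
    show "p k * F k \<le> p k * F 2"
    proof (cases "k \<le> j - 1 \<and> k \<noteq> 2")
      case True
      then have "F k \<le> F 2" unfolding F_def using k assms(5) jb assms(4)
        by (intro FF_mono) auto
      then show ?thesis using assms(8) k by (intro mult_left_mono) auto
    next
      case False
      then have "k = 2 \<or> p k = 0" using assms(10) k by auto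
      then show ?thesis by auto
    qed
  qed
  have s4: "(\<Sum>k=2..b. p k * F 2) = (1 - p 1) * F 2"
    using sum1 assms(9) by (simp add: sum_distrib_right[symmetric])
  have key: "(1 - \<alpha> - p 1) * (F 1 - F 2) \<ge> 0"
  proof (cases "j = 2")
    case True
    then have "(\<Sum>k=2..b. p k) = 0" using assms(10) by (intro sum.neutral) auto
    then have "p 1 = 1" using sum1 assms(9) by simp
    moreover have "p 1 \<le> 1 - \<alpha>" using assms(11) assms(1) by auto
    ultimately have "\<alpha> = 0" using assms(6) by linarith
    then show ?thesis using \<open>p 1 = 1\<close> by simp
  next
    case False
    then have "F 2 \<le> F 1" unfolding F_def using assms(5) jb assms(4) assms(2)
      by (intro FF_mono) auto
    moreover have "p 1 \<le> 1 - \<alpha>" using assms(11,1) by auto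
    ultimately show ?thesis by simp
  qed
  have "(\<Sum>k=1..b. p k * F k) \<le> (1-\<alpha>) * F 1 + \<alpha> * F 2"
    using s2 s3 s4 key by (simp add: algebra_simps)
  then have "Psi b j p q \<le> (1 / fact (b - j - 1)) * ((1-\<alpha>) * F 1 + \<alpha> * F 2)"
    unfolding L using c by (intro mult_left_mono) auto
  with R show ?thesis unfolding p'_def by simp
qed

end
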